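(* Consider the Decaying-$\epsilon$-FOCuS procedure (described in the context) on $M>1$ streams with threshold $\lambda>0$, where stream 1 has a change-point at $\nu=0$ (every observation of stream 1 is $\mathcal{N}(\mu_1,1)$ with $\mu_1\ne0$, all other observations $\mathcal{N}(0,1)$). Let $\hat\nu_{\max}=\sup_{0\le t<\tau}\hat\nu_t$, and let $t_0$ be the smallest time step such that for all $t>t_0$, $T_t^{(1)}>\max_{m\in[M]\setminus\{1\}}T_t^{(m)}$. Then $$\mathbb{E}_{M,0}[\hat\nu_{\max}]\le \mathbb{E}_{M,0}[t_0]+M\,\mathbb{E}_{1,0}\Big[\sup_{t\ge0}\hat\nu_t\Big],$$ where $\mathbb{E}_{1,0}$ refers to the single-stream case $M=1$ (a single stream all of whose observations are i.i.d. $\mathcal{N}(\mu_1,1)$, with $\hat\nu_t$ its GLR change-point estimate).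
   Context: Setting: there are $M$ independent data streams. At each time $t=1,2,\dots$ an agent selects one stream $A_t\in\{1,\dots,M\}$ and observes one value $X_t\in\mathbb{R}$ from it. The $i$-th observation taken from stream $m$ is denoted $X_i^{(m)}$. Pre-change observations are $\mathcal{N}(0,1)$. Stream 1 has a change-point $\nu$: if $A_t=1$ and $t>\nu$ then $X_t\sim\mathcal{N}(\mu_1,1)$ with $\mu_1\neq0$; otherwise $X_t\sim\mathcal{N}(0,1)$; observations are conditionally independent given the selections. $\mathbb{P}_{M,\nu},\mathbb{E}_{M,\nu}$ denote probability/expectation for $M$ streams with change at $\nu$ in stream 1. $\mathcal{F}_t=\sigma(A_1,X_1,\dots,A_t,X_t)$. The sampling process and statistics are defined for all $t\ge 0$. Decaying-$\epsilon$-FOCuS: let $N_t^{(m)}$ be the number of times stream $m$ was selected up to and including time $t$. The local GLR statistic is $T_t^{(m)}=\max_{0\le k<N_t^{(m)}}\frac{(\sum_{i=k+1}^{N_t^{(m)}}X_i^{(m)})^2}{2(N_t^{(m)}-k)}$ (and $T_t^{(m)}=0$ if $N_t^{(m)}=0$); $T_t=\max_m T_t^{(m)}$ and $M_t=\arg\max_m T_t^{(m)}$. The local change-point estimate $\hat\nu_t^{(m)}$ is the time at which stream $m$'s $\hat k$-th observation was taken, where $\hat k$ is the maximizing index $k$ in $T_t^{(m)}$ (time $0$ if $\hat k=0$ or $N_t^{(m)}=0$); the global estimate is $\hat\nu_t=\hat\nu_t^{(M_t)}$; ties are broken uniformly at random. Initially $\hat\nu_0=0$, $M_0$ uniform on $[M]$.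 At time $t$, set $\epsilon_t=\min\{1, M/\max(1,t-\hat\nu_{t-1})^{1/3}\}$, draw $G_t\sim\mathrm{Bernoulli}(\epsilon_t)$ (conditionally on $\mathcal{F}_{t-1}$); if $G_t=1$ choose $A_t$ uniformly from $[M]$, otherwise $A_t=M_{t-1}$; then observe $X_t$ and update the statistics. The procedure stops at $\tau=\inf\{t\ge 1: T_t\ge\lambda\}$. *)

theory Defs
  imports "HOL-Probability.Probability"
begin

text \<open>Coordinates of the underlying sample space.
  Obs m i : the i-th observation (i >= 1) taken from stream m (m in 1..M);
  Gc t    : uniform variable used for the exploration coin G_t at time t;
  Uc t    : uniform variable used for the uniform stream choice at time t;
  Wc t    : uniform variable used for uniform tie-breaking of M_t.\<close>
datatype coord = Obs nat nat | Gc nat | Uc nat | Wc nat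

definition coord_dist :: "real \<Rightarrow> coord \<Rightarrow> real measure" where
  "coord_dist mu c = (case c of
      Obs m i \<Rightarrow> density lborel (normal_density (if m = 1 then mu else 0) 1)
    | _ \<Rightarrow> uniform_measure lborel {0..1})"

definition focus_space :: "real \<Rightarrow> (coord \<Rightarrow> real) measure" where
  "focus_space mu = (\<Pi>\<^sub>M c\<in>UNIV. coord_dist mu c)"

text \<open>A history h is the list [A_1, ..., A_t] of selected streams.\<close>
definition Ncount :: "nat list \<Rightarrow> nat \<Rightarrow> nat" where
  "Ncount h m = length (filter (\<lambda>a. a = m) h)"

definition glr_val :: "(coord \<Rightarrow> real) \<Rightarrow> nat \<Rightarrow> nat \<Rightarrow> nat \<Rightarrow> real" where
  "glr_val \<omega> m N k = (\<Sum>i = k+1..N. \<omega> (Obs m i))^2 / (2 * real (N - k))"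

definition Tloc :: "(coord \<Rightarrow> real) \<Rightarrow> nat list \<Rightarrow> nat \<Rightarrow> real" where
  "Tloc \<omega> h m = (let N = Ncount h m in
     if N = 0 then 0 else Max (glr_val \<omega> m N ` {0..<N}))"

text \<open>Maximising index (ties among k are a null event; least maximiser chosen).\<close>
definition khat :: "(coord \<Rightarrow> real) \<Rightarrow> nat list \<Rightarrow> nat \<Rightarrow> nat" where
  "khat \<omega> h m = (let N = Ncount h m in
     if N = 0 then 0 else (LEAST k. k < N \<and> glr_val \<omega> m N k = Tloc \<omega> h m))"

text \<open>Time (1-based) at which the k-th observation (k >= 1) of stream m was taken.\<close>
definition obs_time :: "nat list \<Rightarrow> nat \<Rightarrow> nat \<Rightarrow> nat" where
  "obs_time h m k = filter (\<lambda>j. h ! (j - 1) = m) [1..<length h + 1] ! (k - 1)"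

definition nuhat_loc :: "(coord \<Rightarrow> real) \<Rightarrow> nat list \<Rightarrow> nat \<Rightarrow> nat" where
  "nuhat_loc \<omega> h m = (let k = khat \<omega> h m in if k = 0 then 0 else obs_time h m k)"

definition Tglob :: "nat \<Rightarrow> (coord \<Rightarrow> real) \<Rightarrow> nat list \<Rightarrow> real" where
  "Tglob M \<omega> h = Max (Tloc \<omega> h ` {1..M})"

text \<open>Uniform choice from a finite nonempty set S of naturals driven by w uniform on [0,1].\<close>
definition pick_unif :: "nat set \<Rightarrow> real \<Rightarrow> nat" where
  "pick_unif S w = sorted_list_of_set S ! min (card S - 1) (nat \<lfloor>w * real (card S)\<rfloor>)"

text \<open>M_t: argmax stream at time t (history h of length t), ties broken uniformly.\<close>
definition Mt :: "nat \<Rightarrow> (coord \<Rightarrow> real) \<Rightarrow> nat list \<Rightarrow> nat \<Rightarrow> nat" where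
  "Mt M \<omega> h t = pick_unif {m \<in> {1..M}. Tloc \<omega> h m = Tglob M \<omega> h} (\<omega> (Wc t))"

definition nuhat_glob :: "nat \<Rightarrow> (coord \<Rightarrow> real) \<Rightarrow> nat list \<Rightarrow> nat \<Rightarrow> nat" where
  "nuhat_glob M \<omega> h t = nuhat_loc \<omega> h (Mt M \<omega> h t)"

definition eps :: "nat \<Rightarrow> nat \<Rightarrow> nat \<Rightarrow> real" where
  "eps M t nu = min 1 (real M / (max 1 (real t - real nu)) powr (1/3))"

text \<open>Selection A_t at time t >= 1 given the history h = [A_1..A_{t-1}].\<close>
definition select :: "nat \<Rightarrow> (coord \<Rightarrow> real) \<Rightarrow> nat list \<Rightarrow> nat \<Rightarrow> nat" where
  "select M \<omega> h t =
     (if \<omega> (Gc t) < eps M t (nuhat_glob M \<omega> h (t - 1))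
      then 1 + min (M - 1) (nat \<lfloor>\<omega> (Uc t) * real M\<rfloor>)
      else Mt M \<omega> h (t - 1))"

fun hist :: "nat \<Rightarrow> (coord \<Rightarrow> real) \<Rightarrow> nat \<Rightarrow> nat list" where
  "hist M \<omega> 0 = []"
| "hist M \<omega> (Suc t) = hist M \<omega> t @ [select M \<omega> (hist M \<omega> t) (Suc t)]"

definition T_t :: "nat \<Rightarrow> (coord \<Rightarrow> real) \<Rightarrow> nat \<Rightarrow> real" where
  "T_t M \<omega> t = Tglob M \<omega> (hist M \<omega> t)"

definition T_loc_t :: "nat \<Rightarrow> (coord \<Rightarrow> real) \<Rightarrow> nat \<Rightarrow> nat \<Rightarrow> real" where
  "T_loc_t M \<omega> t m = Tloc \<omega> (hist M \<omega> t) m"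

definition nuhat_t :: "nat \<Rightarrow> (coord \<Rightarrow> real) \<Rightarrow> nat \<Rightarrow> nat" where
  "nuhat_t M \<omega> t = nuhat_glob M \<omega> (hist M \<omega> t) t"

text \<open>sup over 0 <= t < tau, where tau = inf{t >= 1 : T_t >= lam} (possibly infinite).\<close>
definition nuhat_max :: "nat \<Rightarrow> real \<Rightarrow> (coord \<Rightarrow> real) \<Rightarrow> ennreal" where
  "nuhat_max M lam \<omega> =
     (SUP t \<in> {t. \<forall>s. 1 \<le> s \<and> s \<le> t \<longrightarrow> T_t M \<omega> s < lam}. ennreal (real (nuhat_t M \<omega> t)))"

definition stream1_leads_after :: "nat \<Rightarrow> (coord \<Rightarrow> real) \<Rightarrow> nat \<Rightarrow> bool" where
  "stream1_leads_after M \<omega> n =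
     (\<forall>t > n. T_loc_t M \<omega> t 1 > Max ((T_loc_t M \<omega> t) ` {2..M}))"

definition t0 :: "nat \<Rightarrow> (coord \<Rightarrow> real) \<Rightarrow> ennreal" where
  "t0 M \<omega> = (if \<exists>n. stream1_leads_after M \<omega> n
              then of_nat (LEAST n. stream1_leads_after M \<omega> n) else \<infinity>)"

end

theory Submission
  imports Defs
begin


lemma sets_coord_dist[simp, measurable_cong]: "sets (coord_dist mu c) = sets borel"
  by (cases c) (auto simp: coord_dist_def)

lemma prob_coord_dist: "prob_space (coord_dist mu c)"
  apply (cases c)
  apply (auto simp: coord_dist_def prob_space_normal_density intro!: prob_space_uniform_measure)
  done

lemma space_coord_dist[simp]: "space (coord_dist mu c) = UNIV"
  by (cases c) (auto simp: coord_dist_def)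

lemma space_focus[simp]: "space (focus_space mu) = UNIV"
  by (simp add: focus_space_def space_PiM PiE_def)

lemma coord_meas[measurable]: "(\<lambda>\<omega>. \<omega> c) \<in> borel_measurable (focus_space mu)"
proof -
  have "(\<lambda>\<omega>. \<omega> c) \<in> measurable (focus_space mu) (coord_dist mu c)"
    unfolding focus_space_def by (rule measurable_component_singleton) (rule UNIV_I)
  moreover have "measurable (focus_space mu) (coord_dist mu c) = borel_measurable (focus_space mu)"
    by (rule measurable_cong_sets[OF refl sets_coord_dist])
  ultimately show ?thesis by simp
qed

lemma glr_meas[measurable]: "(\<lambda>\<omega>. glr_val \<omega> m N k) \<in> borel_measurable (focus_space mu)"
  unfolding glr_val_def by measurable

lemma Tloc_meas[measurable]: "(\<lambda>\<omega>. Tloc \<omega> h m) \<in> borel_measurable (focus_space mu)"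
proof (cases "Ncount h m = 0")
  case True then show ?thesis by (simp add: Tloc_def)
next
  case False
  have "(\<lambda>\<omega>. Max ((\<lambda>k. glr_val \<omega> m (Ncount h m) k) ` {0..<Ncount h m})) \<in> borel_measurable (focus_space mu)"
    by (rule borel_measurable_Max) auto
  with False show ?thesis by (simp add: Tloc_def Let_def)
qed

lemma khat_meas[measurable]: "(\<lambda>\<omega>. khat \<omega> h m) \<in> measurable (focus_space mu) (count_space UNIV)"
proof -
  have L: "(\<lambda>\<omega>. LEAST k. k < Ncount h m \<and> glr_val \<omega> m (Ncount h m) k = Tloc \<omega> h m) \<in> measurable (focus_space mu) (count_space UNIV)"
  proof (rule measurable_Least)
    fix k
    have "{\<omega> \<in> space (focus_space mu). glr_val \<omega> m (Ncount h m) k = Tloc \<omega> h m} \<in> sets (focus_space mu)"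
      by (rule borel_measurable_eq[OF glr_meas Tloc_meas])
    then have "(\<lambda>\<omega>. glr_val \<omega> m (Ncount h m) k = Tloc \<omega> h m) \<in> measurable (focus_space mu) (count_space UNIV)"
      by (subst Measurable.pred_def) simp
    then show "(\<lambda>\<omega>. k < Ncount h m \<and> glr_val \<omega> m (Ncount h m) k = Tloc \<omega> h m) \<in> measurable (focus_space mu) (count_space UNIV)"
    proof (cases "k < Ncount h m")
      case True with \<open>(\<lambda>\<omega>. glr_val \<omega> m (Ncount h m) k = Tloc \<omega> h m) \<in> _\<close> show ?thesis by simp
    next
      case False then show ?thesis by simp
    qed
  qed
  show ?thesis
  proof (cases "Ncount h m = 0")
    case True
    then have eq: "(\<lambda>\<omega>. khat \<omega> h m) = (\<lambda>_. 0)" by (simp add: khat_def fun_eq_iff)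
    show ?thesis by (subst eq) (rule measurable_const, simp)
  next
    case False
    then have eq: "(\<lambda>\<omega>. khat \<omega> h m) = (\<lambda>\<omega>. LEAST k. k < Ncount h m \<and> glr_val \<omega> m (Ncount h m) k = Tloc \<omega> h m)"
      by (simp add: khat_def Let_def fun_eq_iff)
    show ?thesis by (subst eq) (rule L)
  qed
qed

lemma count_comp:
  assumes "f \<in> measurable N (count_space UNIV)"
  shows "(\<lambda>x. g (f x)) \<in> measurable N (count_space UNIV)"
  by (rule measurable_compose[OF assms]) simp

lemma count_comp_borel:
  assumes "f \<in> measurable N (count_space UNIV)"
  shows "(\<lambda>x. (g (f x) :: real)) \<in> borel_measurable N"
  by (rule measurable_compose[OF assms]) simp

lemma nuhat_loc_meas[measurable]: "(\<lambda>\<omega>. nuhat_loc \<omega> h m) \<in> measurable (focus_space mu) (count_space UNIV)"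
  unfolding nuhat_loc_def Let_def by (rule count_comp[OF khat_meas])

lemma Tglob_meas[measurable]: "(\<lambda>\<omega>. Tglob M \<omega> h) \<in> borel_measurable (focus_space mu)"
  unfolding Tglob_def by (rule borel_measurable_Max) (auto intro: Tloc_meas)

lemma pick_meas:
  assumes "f \<in> borel_measurable N"
  shows "(\<lambda>\<omega>. pick_unif S (f \<omega>)) \<in> measurable N (count_space UNIV)"
proof -
  have "(\<lambda>\<omega>. f \<omega> * real (card S)) \<in> borel_measurable N"
    using assms by measurable
  then have "(\<lambda>\<omega>. \<lfloor>f \<omega> * real (card S)\<rfloor>) \<in> measurable N (count_space UNIV)"
    by (rule measurable_compose[OF _ measurable_real_floor])
  then show ?thesis unfolding pick_unif_def by (rule count_comp)
qed

lemma Mt_meas[measurable]: "(\<lambda>\<omega>. Mt M \<omega> h t) \<in> measurable (focus_space mu) (count_space UNIV)"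
proof -
  let ?S = "\<lambda>\<omega>. {m \<in> {1..M}. Tloc \<omega> h m = Tglob M \<omega> h}"
  have S: "?S \<in> measurable (focus_space mu) (count_space (Pow {1..M}))"
  proof (subst measurable_count_space_eq_countable)
    show "countable (Pow {1..M})" by (rule countable_finite) simp
    show "?S \<in> space (focus_space mu) \<rightarrow> Pow {1..M} \<and>
      (\<forall>a\<in>Pow {1..M}. ?S -` {a} \<inter> space (focus_space mu) \<in> sets (focus_space mu))"
    proof safe
      fix a assume "a \<subseteq> {1..M}"
      have "?S -` {a} \<inter> space (focus_space mu) = {\<omega> \<in> space (focus_space mu). \<forall>m\<in>{1..M}. (Tloc \<omega> h m = Tglob M \<omega> h) = (m \<in> a)}"
        using subsetD[OF \<open>a \<subseteq> {1..M}\<close>] by (auto simp del: atLeastAtMost_iff)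
      also have "\<dots> \<in> sets (focus_space mu)"
      proof (rule sets.sets_Collect_finite_All)
        fix m
        have E: "{\<omega> \<in> space (focus_space mu). Tloc \<omega> h m = Tglob M \<omega> h} \<in> sets (focus_space mu)"
          by (rule borel_measurable_eq[OF Tloc_meas Tglob_meas])
        show "{\<omega> \<in> space (focus_space mu). (Tloc \<omega> h m = Tglob M \<omega> h) = (m \<in> a)} \<in> sets (focus_space mu)"
        proof (cases "m \<in> a")
          case True then show ?thesis using E by simp
        next
          case False
          have "{\<omega> \<in> space (focus_space mu). (Tloc \<omega> h m = Tglob M \<omega> h) = (m \<in> a)} = space (focus_space mu) - {\<omega> \<in> space (focus_space mu). Tloc \<omega> h m = Tglob M \<omega> h}"
            using False by auto
          then show ?thesis using E by (metis sets.compl_sets)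
        qed
      qed simp
      finally show "?S -` {a} \<inter> space (focus_space mu) \<in> sets (focus_space mu)" .
    qed
  qed
  have "(\<lambda>\<omega>. (\<lambda>S \<omega>. pick_unif S (\<omega> (Wc t))) (?S \<omega>) \<omega>) \<in> measurable (focus_space mu) (count_space UNIV)"
    by (rule measurable_compose_countable'[OF _ S]) (auto intro: pick_meas coord_meas countable_finite)
  then show ?thesis unfolding Mt_def by simp
qed

lemma nuhat_glob_meas[measurable]: "(\<lambda>\<omega>. nuhat_glob M \<omega> h t) \<in> measurable (focus_space mu) (count_space UNIV)"
  unfolding nuhat_glob_def
  by (rule measurable_compose_countable[where g="\<lambda>\<omega>. Mt M \<omega> h t", OF nuhat_loc_meas Mt_meas])

lemma select_meas[measurable]: "(\<lambda>\<omega>. select M \<omega> h t) \<in> measurable (focus_space mu) (count_space UNIV)"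
proof -
  have e: "(\<lambda>\<omega>. eps M t (nuhat_glob M \<omega> h (t - 1))) \<in> borel_measurable (focus_space mu)"
    by (rule count_comp_borel[OF nuhat_glob_meas])
  have "(\<lambda>\<omega>. \<omega> (Uc t) * real M) \<in> borel_measurable (focus_space mu)"
    by measurable
  then have "(\<lambda>\<omega>. \<lfloor>\<omega> (Uc t) * real M\<rfloor>) \<in> measurable (focus_space mu) (count_space UNIV)"
    by (rule measurable_compose[OF _ measurable_real_floor])
  then have a: "(\<lambda>\<omega>. 1 + min (M - 1) (nat \<lfloor>\<omega> (Uc t) * real M\<rfloor>)) \<in> measurable (focus_space mu) (count_space UNIV)"
    by (rule count_comp)
  have c: "{\<omega> \<in> space (focus_space mu). \<omega> (Gc t) < eps M t (nuhat_glob M \<omega> h (t - 1))} \<in> sets (focus_space mu)"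
    by (rule borel_measurable_less[OF coord_meas e])
  show ?thesis unfolding select_def
    by (rule measurable_If[OF a Mt_meas c])
qed

lemma hist_meas[measurable]: "(\<lambda>\<omega>. hist M \<omega> t) \<in> measurable (focus_space mu) (count_space UNIV)"
proof (induction t)
  case 0 show ?case by (simp del: space_focus)
next
  case (Suc t)
  have "(\<lambda>\<omega>. (\<lambda>h \<omega>. h @ [select M \<omega> h (Suc t)]) (hist M \<omega> t) \<omega>) \<in> measurable (focus_space mu) (count_space UNIV)"
    by (rule measurable_compose_countable[OF _ Suc]) (rule count_comp[OF select_meas])
  then show ?case by simp
qed




lemma Ncount_snoc[simp]: "Ncount (h @ [x]) m = Ncount h m + (if x = m then 1 else 0)"
  by (simp add: Ncount_def)

lemma Ncount_Nil[simp]: "Ncount [] m = 0"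
  by (simp add: Ncount_def)

lemma length_hist[simp]: "length (hist M \<omega> t) = t"
  by (induction t) simp_all

lemma take_hist: "s \<le> t \<Longrightarrow> take s (hist M \<omega> t) = hist M \<omega> s"
proof (induction t)
  case 0 then show ?case by simp
next
  case (Suc t)
  show ?case
  proof (cases "s = Suc t")
    case True
    then show ?thesis by (metis length_hist take_all order_refl)
  next
    case False
    with Suc.prems have "s \<le> t" by simp
    then show ?thesis using Suc.IH by simp
  qed
qed

lemma glr_nonneg: "glr_val \<omega> m N k \<ge> 0"
  by (simp add: glr_val_def)

lemma Tloc_nonneg: "Tloc \<omega> h m \<ge> 0"
proof (cases "Ncount h m = 0")
  case True then show ?thesis by (simp add: Tloc_def)
next
  case False
  then have "glr_val \<omega> m (Ncount h m) 0 \<le> Max (glr_val \<omega> m (Ncount h m) ` {0..<Ncount h m})"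
    by (intro Max_ge) auto
  then have "0 \<le> Max (glr_val \<omega> m (Ncount h m) ` {0..<Ncount h m})"
    using glr_nonneg[of \<omega> m "Ncount h m" 0] by linarith
  with False show ?thesis
    by (simp add: Tloc_def Let_def)
qed

lemma khat_lt:
  assumes "Ncount h m \<noteq> 0"
  shows "khat \<omega> h m < Ncount h m"
proof -
  let ?N = "Ncount h m"
  have "Max (glr_val \<omega> m ?N ` {0..<?N}) \<in> glr_val \<omega> m ?N ` {0..<?N}"
    using assms by (intro Max_in) auto
  then obtain k0 where k0': "k0 \<in> {0..<?N}" "Max (glr_val \<omega> m ?N ` {0..<?N}) = glr_val \<omega> m ?N k0"
    by blast
  then have k0: "k0 < ?N" "glr_val \<omega> m ?N k0 = Tloc \<omega> h m"
    using assms by (auto simp: Tloc_def Let_def)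
  have "(LEAST k. k < ?N \<and> glr_val \<omega> m ?N k = Tloc \<omega> h m) < ?N"
    using LeastI[of "\<lambda>k. k < ?N \<and> glr_val \<omega> m ?N k = Tloc \<omega> h m" k0] k0 by blast
  then show ?thesis using assms by (simp add: khat_def Let_def)
qed

lemma khat_zero: "Ncount h m = 0 \<Longrightarrow> khat \<omega> h m = 0"
  by (simp add: khat_def)

lemma khat_cong: "Ncount h m = Ncount h' m \<Longrightarrow> khat \<omega> h m = khat \<omega> h' m"
  by (simp add: khat_def Tloc_def Let_def)

definition obsl :: "nat list \<Rightarrow> nat \<Rightarrow> nat list" where
  "obsl h m = filter (\<lambda>j. h ! (j - 1) = m) [1..<length h + 1]"

lemma obsl_snoc: "obsl (h @ [x]) m = obsl h m @ (if x = m then [length h + 1] else [])"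
proof -
  have "filter (\<lambda>j. (h @ [x]) ! (j - 1) = m) [1..<length h + 1] = filter (\<lambda>j. h ! (j - 1) = m) [1..<length h + 1]"
    by (rule filter_cong) (auto simp: nth_append)
  then show ?thesis
    by (simp add: obsl_def)
qed

lemma obsl_props:
  "length (obsl h m) = Ncount h m \<and>
   (\<forall>k. 1 \<le> k \<and> k \<le> Ncount h m \<longrightarrow>
      1 \<le> obsl h m ! (k - 1) \<and> obsl h m ! (k - 1) \<le> length h \<and>
      Ncount (take (obsl h m ! (k - 1)) h) m = k \<and> h ! (obsl h m ! (k - 1) - 1) = m)"
proof (induction h rule: rev_induct)
  case Nil then show ?case by (simp add: obsl_def)
next
  case (snoc x h)
  have IH1: "length (obsl h m) = Ncount h m" using snoc.IH by blast
  have IH2: "\<And>k. 1 \<le> k \<Longrightarrow> k \<le> Ncount h m \<Longrightarrow>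
      1 \<le> obsl h m ! (k - 1) \<and> obsl h m ! (k - 1) \<le> length h \<and>
      Ncount (take (obsl h m ! (k - 1)) h) m = k \<and> h ! (obsl h m ! (k - 1) - 1) = m"
    using snoc.IH by blast
  have len: "length (obsl (h @ [x]) m) = Ncount (h @ [x]) m"
    using IH1 by (simp add: obsl_snoc)
  show ?case
  proof (rule conjI[OF len], intro allI impI)
    fix k assume k: "1 \<le> k \<and> k \<le> Ncount (h @ [x]) m"
    show "1 \<le> obsl (h @ [x]) m ! (k - 1) \<and> obsl (h @ [x]) m ! (k - 1) \<le> length (h @ [x]) \<and>
      Ncount (take (obsl (h @ [x]) m ! (k - 1)) (h @ [x])) m = k \<and> (h @ [x]) ! (obsl (h @ [x]) m ! (k - 1) - 1) = m"
    proof (cases "k \<le> Ncount h m")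
      case True
      let ?s = "obsl h m ! (k - 1)"
      have "k - 1 < length (obsl h m)" unfolding IH1 using True k by linarith
      then have s: "obsl (h @ [x]) m ! (k - 1) = ?s"
        by (simp add: obsl_snoc nth_append)
      have P: "1 \<le> ?s \<and> ?s \<le> length h \<and> Ncount (take ?s h) m = k \<and> h ! (?s - 1) = m"
        using IH2[of k] True k by blast
      then show ?thesis unfolding s by (auto simp: nth_append)
    next
      case False
      with k have xm: "x = m" and kk: "k = Ncount h m + 1" by (auto split: if_splits)
      have s: "obsl (h @ [x]) m ! (k - 1) = length h + 1"
        using kk xm IH1 by (simp add: obsl_snoc nth_append)
      show ?thesis unfolding s using kk xm by (simp add: nth_append)
    qed
  qed
qed

lemma obs_time_props:
  assumes "1 \<le> k" "k \<le> Ncount h m"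
  shows "1 \<le> obs_time h m k \<and> obs_time h m k \<le> length h \<and>
      Ncount (take (obs_time h m k) h) m = k \<and> h ! (obs_time h m k - 1) = m"
  using obsl_props[of h m] assms unfolding obs_time_def obsl_def[symmetric] by blast

lemma nuhat_loc_le: "nuhat_loc \<omega> h m \<le> length h"
proof (cases "khat \<omega> h m = 0")
  case True then show ?thesis by (simp add: nuhat_loc_def)
next
  case False
  then have "Ncount h m \<noteq> 0" by (metis khat_zero)
  then have "khat \<omega> h m < Ncount h m" by (rule khat_lt)
  then show ?thesis using False obs_time_props[of "khat \<omega> h m" h m]
    by (simp add: nuhat_loc_def Let_def)
qed

lemma nuhat_t_le: "nuhat_t M \<omega> t \<le> t"
  using nuhat_loc_le[of \<omega> "hist M \<omega> t"] by (simp add: nuhat_t_def nuhat_glob_def)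

lemma pick_single[simp]: "pick_unif {a} w = a"
  by (simp add: pick_unif_def)

lemma Mt_leader:
  assumes M: "M \<ge> 2" and lead: "Tloc \<omega> h 1 > Max (Tloc \<omega> h ` {2..M})"
  shows "Mt M \<omega> h t = 1"
proof -
  have fin: "finite (Tloc \<omega> h ` {2..M})" "Tloc \<omega> h ` {2..M} \<noteq> {}" using M by auto
  have ins: "{1..M} = insert 1 {2..M}" using M by auto
  have G: "Tglob M \<omega> h = Tloc \<omega> h 1"
    unfolding Tglob_def ins image_insert using Max_insert[OF fin] lead by simp
  have "{m \<in> {1..M}. Tloc \<omega> h m = Tglob M \<omega> h} = {1}"
  proof safe
    fix m assume m: "m \<in> {1..M}" "Tloc \<omega> h m = Tglob M \<omega> h"
    show "m = 1"
    proof (rule ccontr)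
      assume "m \<noteq> 1"
      with m have "m \<in> {2..M}" by auto
      then have "Tloc \<omega> h m \<le> Max (Tloc \<omega> h ` {2..M})" using fin by (intro Max_ge) auto
      with lead m G show False by simp
    qed
  qed (use M G in auto)
  then show ?thesis by (simp add: Mt_def)
qed

lemma select_single: "select (Suc 0) \<omega> h t = Suc 0"
proof -
  have "Mt (Suc 0) \<omega> h' t' = Suc 0" for h' t'
  proof -
    have "{m \<in> {1..Suc 0}. Tloc \<omega> h' m = Tglob (Suc 0) \<omega> h'} = {1}"
      by (auto simp: Tglob_def)
    then show ?thesis by (simp add: Mt_def)
  qed
  then show ?thesis by (simp add: select_def)
qed

lemma hist_single: "hist (Suc 0) \<omega> t = replicate t (Suc 0)"
  by (induction t) (simp_all add: select_single replicate_append_same)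

lemma obs_time_rep:
  assumes "1 \<le> k" "k \<le> N"
  shows "obs_time (replicate N (Suc 0)) (Suc 0) k = k"
proof -
  have "filter (\<lambda>j. replicate N (Suc 0) ! (j - 1) = Suc 0) [1..<N + 1] = [1..<N + 1]"
    by (rule filter_True) auto
  moreover have "[1..<N + 1] ! (k - 1) = k" using assms by (subst nth_upt) auto
  ultimately show ?thesis by (simp only: obs_time_def length_replicate)
qed

lemma nuhat_single: "nuhat_t (Suc 0) \<omega> N = khat \<omega> (replicate N (Suc 0)) (Suc 0)"
proof -
  have Mt1: "Mt (Suc 0) \<omega> h' t' = Suc 0" for h' t'
  proof -
    have "{m \<in> {1..Suc 0}. Tloc \<omega> h' m = Tglob (Suc 0) \<omega> h'} = {1}"
      by (auto simp: Tglob_def)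
    then show ?thesis by (simp add: Mt_def)
  qed
  have cnt: "Ncount (replicate N (Suc 0)) (Suc 0) = N"
    by (simp add: Ncount_def)
  show ?thesis
  proof (cases "khat \<omega> (replicate N (Suc 0)) (Suc 0) = 0")
    case True then show ?thesis
      by (simp add: nuhat_t_def nuhat_glob_def Mt1 hist_single nuhat_loc_def)
  next
    case False
    then have "N \<noteq> 0" using khat_zero[of "replicate N (Suc 0)" "Suc 0"] cnt by metis
    then have "khat \<omega> (replicate N (Suc 0)) (Suc 0) < N" using khat_lt[of "replicate N (Suc 0)" "Suc 0"] cnt by simp
    then show ?thesis using False obs_time_rep[of "khat \<omega> (replicate N (Suc 0)) (Suc 0)" N]
      by (simp add: nuhat_t_def nuhat_glob_def Mt1 hist_single nuhat_loc_def Let_def)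
  qed
qed

lemma khat_le_single: "khat \<omega> h (Suc 0) = nuhat_t (Suc 0) \<omega> (Ncount h (Suc 0))"
  unfolding nuhat_single by (rule khat_cong) (simp add: Ncount_def)




abbreviation Nn :: "nat \<Rightarrow> (coord \<Rightarrow> real) \<Rightarrow> nat \<Rightarrow> nat" where
  "Nn M \<omega> j \<equiv> Ncount (hist M \<omega> j) 1"

abbreviation sel :: "nat \<Rightarrow> (coord \<Rightarrow> real) \<Rightarrow> nat \<Rightarrow> nat" where
  "sel M \<omega> j \<equiv> select M \<omega> (hist M \<omega> j) (Suc j)"

lemma Nn_Suc: "Nn M \<omega> (Suc j) = Nn M \<omega> j + (if sel M \<omega> j = 1 then 1 else 0)"
  by simp

lemma count_lemma:
  assumes "a \<le> b"
  shows "Nn M \<omega> b + card {j \<in> {a..<b}. sel M \<omega> j \<noteq> 1} = Nn M \<omega> a + (b - a)"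
  using assms
proof (induction b rule: dec_induct)
  case base then show ?case by simp
next
  case (step b)
  have eq: "{j \<in> {a..<Suc b}. sel M \<omega> j \<noteq> 1} =
      (if sel M \<omega> b \<noteq> 1 then insert b {j \<in> {a..<b}. sel M \<omega> j \<noteq> 1} else {j \<in> {a..<b}. sel M \<omega> j \<noteq> 1})"
    using step.hyps by (auto simp: less_Suc_eq)
  have "card {j \<in> {a..<Suc b}. sel M \<omega> j \<noteq> 1} = card {j \<in> {a..<b}. sel M \<omega> j \<noteq> 1} + (if sel M \<omega> b \<noteq> 1 then 1 else 0)"
    unfolding eq by auto
  then show ?case using step.IH step.hyps Nn_Suc[of M \<omega> b] by (auto split: if_splits)
qed

lemma Nn_mono: "a \<le> b \<Longrightarrow> Nn M \<omega> a \<le> Nn M \<omega> b"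
proof (induction b rule: dec_induct)
  case (step b) then show ?case using Nn_Suc[of M \<omega> b] by linarith
qed simp

definition Kmax :: "(coord \<Rightarrow> real) \<Rightarrow> ennreal" where
  "Kmax \<omega> = (SUP t. ennreal (real (nuhat_t 1 \<omega> t)))"

definition condj :: "nat \<Rightarrow> (coord \<Rightarrow> real) \<Rightarrow> nat \<Rightarrow> bool" where
  "condj M \<omega> j \<longleftrightarrow> ennreal (real (Nn M \<omega> j)) < Kmax \<omega> \<and>
     \<omega> (Gc (Suc j)) < eps M (Suc j) (nuhat_glob M \<omega> (hist M \<omega> j) j)"

definition Dterm :: "nat \<Rightarrow> (coord \<Rightarrow> real) \<Rightarrow> nat \<Rightarrow> ennreal" where
  "Dterm M \<omega> j = (if condj M \<omega> j \<and> 1 / real M \<le> \<omega> (Uc (Suc j)) then 1 else 0)"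

definition Eterm :: "nat \<Rightarrow> (coord \<Rightarrow> real) \<Rightarrow> nat \<Rightarrow> ennreal" where
  "Eterm M \<omega> j = (if condj M \<omega> j \<and> \<omega> (Uc (Suc j)) < 1 / real M then 1 else 0)"

lemma sel_explore:
  assumes M: "M \<ge> 1" and Mt: "Mt M \<omega> (hist M \<omega> j) j = 1" and s: "sel M \<omega> j \<noteq> 1"
  shows "\<omega> (Gc (Suc j)) < eps M (Suc j) (nuhat_glob M \<omega> (hist M \<omega> j) j) \<and> 1 / real M \<le> \<omega> (Uc (Suc j))"
proof -
  have g: "\<omega> (Gc (Suc j)) < eps M (Suc j) (nuhat_glob M \<omega> (hist M \<omega> j) j)"
    using s Mt by (auto simp: select_def split: if_splits)
  then have "1 + min (M - 1) (nat \<lfloor>\<omega> (Uc (Suc j)) * real M\<rfloor>) \<noteq> 1"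
    using s by (simp add: select_def)
  then have "nat \<lfloor>\<omega> (Uc (Suc j)) * real M\<rfloor> \<noteq> 0" by auto
  then have "1 \<le> \<omega> (Uc (Suc j)) * real M" by linarith
  then have "1 / real M \<le> \<omega> (Uc (Suc j))" using M by (simp add: divide_le_eq mult.commute)
  with g show ?thesis by simp
qed

lemma sel_one:
  assumes M: "M \<ge> 1" and g: "\<omega> (Gc (Suc j)) < eps M (Suc j) (nuhat_glob M \<omega> (hist M \<omega> j) j)"
    and u: "\<omega> (Uc (Suc j)) < 1 / real M"
  shows "sel M \<omega> j = 1"
proof -
  have "\<omega> (Uc (Suc j)) * real M < 1" using u M by (simp add: less_divide_eq mult.commute)
  then have "nat \<lfloor>\<omega> (Uc (Suc j)) * real M\<rfloor> = 0" by linarith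
  then show ?thesis using g by (simp add: select_def)
qed

lemma Kmax_ge: "ennreal (real (nuhat_t 1 \<omega> t)) \<le> Kmax \<omega>"
  unfolding Kmax_def by (rule SUP_upper) simp

lemma lead_Mt:
  assumes M: "M \<ge> 2" and lead: "stream1_leads_after M \<omega> n" and j: "j > n"
  shows "Mt M \<omega> (hist M \<omega> j) t' = 1"
proof -
  have "T_loc_t M \<omega> j 1 > Max ((T_loc_t M \<omega> j) ` {2..M})"
    using lead j by (simp add: stream1_leads_after_def)
  then have "Tloc \<omega> (hist M \<omega> j) 1 > Max (Tloc \<omega> (hist M \<omega> j) ` {2..M})"
    by (simp add: T_loc_t_def)
  then show ?thesis by (rule Mt_leader[OF M])
qed

lemma lead_N:
  assumes M: "M \<ge> 2" and lead: "stream1_leads_after M \<omega> n" and j: "j > n"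
  shows "Nn M \<omega> j \<ge> 1"
proof -
  have "T_loc_t M \<omega> j 1 > Max ((T_loc_t M \<omega> j) ` {2..M})"
    using lead j by (simp add: stream1_leads_after_def)
  moreover have "T_loc_t M \<omega> j 2 \<le> Max ((T_loc_t M \<omega> j) ` {2..M})"
    using M by (intro Max_ge) auto
  ultimately have "Tloc \<omega> (hist M \<omega> j) 1 > 0"
    using Tloc_nonneg[of \<omega> "hist M \<omega> j" 2] by (simp add: T_loc_t_def)
  then show ?thesis by (cases "Nn M \<omega> j = 0") (auto simp: Tloc_def)
qed


lemma pw_bound:
  assumes M: "M \<ge> 2" and lead: "stream1_leads_after M \<omega> n"
  shows "ennreal (real (nuhat_t M \<omega> t)) \<le> of_nat n + Kmax \<omega> + suminf (Dterm M \<omega>)"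
proof (cases "t \<le> n")
  case True
  have "ennreal (real (nuhat_t M \<omega> t)) \<le> of_nat n"
    using nuhat_t_le[of M \<omega> t] True by (simp add: ennreal_of_nat_eq_real_of_nat)
  also have "\<dots> \<le> of_nat n + Kmax \<omega> + suminf (Dterm M \<omega>)"
    by (simp add: add.assoc)
  finally show ?thesis .
next
  case False
  then have tn: "t > n" by simp
  define h where "h = hist M \<omega> t"
  define k where "k = khat \<omega> h 1"
  have nu: "nuhat_t M \<omega> t = nuhat_loc \<omega> h 1"
    using lead_Mt[OF M lead tn] by (simp add: nuhat_t_def nuhat_glob_def h_def)
  show ?thesis
  proof (cases "k = 0")
    case True
    then have "nuhat_t M \<omega> t = 0" by (simp add: nu nuhat_loc_def k_def)
    then show ?thesis by simp
  next
    case False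
    then have N0: "Ncount h 1 \<noteq> 0" unfolding k_def by (metis khat_zero)
    then have kN: "k < Ncount h 1" unfolding k_def by (rule khat_lt)
    define s where "s = obs_time h 1 k"
    have sprops: "1 \<le> s \<and> s \<le> length h \<and> Ncount (take s h) 1 = k \<and> h ! (s - 1) = 1"
      unfolding s_def using obs_time_props[of k h 1] False kN by simp
    have st: "s \<le> t" using sprops by (simp add: h_def)
    have Ns: "Nn M \<omega> s = k" using sprops take_hist[OF st, of M \<omega>] by (simp add: h_def)
    have s_eq: "Suc (s - 1) = s" using sprops by simp
    have hs: "hist M \<omega> s = hist M \<omega> (s - 1) @ [sel M \<omega> (s - 1)]"
      using hist.simps(2)[of M \<omega> "s - 1"] unfolding s_eq .
    have "take s h ! (s - 1) = h ! (s - 1)"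
      using sprops by (intro nth_take) simp
    moreover have "take s h = hist M \<omega> s" unfolding h_def by (rule take_hist[OF st])
    ultimately have "h ! (s - 1) = hist M \<omega> s ! (s - 1)" by simp
    then have sel1: "sel M \<omega> (s - 1) = 1"
      using sprops hs by (simp add: nth_append)
    have Ns1: "Nn M \<omega> (s - 1) = k - 1"
      using Ns hs sel1 by simp
    have "nuhat_loc \<omega> h 1 = obs_time h 1 k"
      unfolding nuhat_loc_def Let_def k_def[symmetric] using False by simp
    then have nus: "nuhat_t M \<omega> t = s" using nu by (simp add: s_def)
    have kK: "of_nat k \<le> Kmax \<omega>"
      using Kmax_ge[of \<omega> "Ncount h (Suc 0)"] khat_le_single[of \<omega> h]
      by (simp add: k_def ennreal_of_nat_eq_real_of_nat)
    show ?thesis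
    proof (cases "s \<le> n + 1")
      case True
      then have "s \<le> n + k" using False by simp
      then have "ennreal (real s) \<le> of_nat n + of_nat k"
        by (simp add: ennreal_of_nat_eq_real_of_nat[symmetric] of_nat_add[symmetric] del: of_nat_add)
      also have "\<dots> \<le> of_nat n + Kmax \<omega> + suminf (Dterm M \<omega>)"
        using kK by (metis add_left_mono le_iff_add add.assoc)
      finally show ?thesis by (simp add: nus)
    next
      case False
      define C where "C = card {j \<in> {n+1..<s}. sel M \<omega> j \<noteq> 1}"
      have cl: "Nn M \<omega> s + C = Nn M \<omega> (n+1) + (s - (n+1))"
        unfolding C_def using False by (intro count_lemma) simp
      have "Nn M \<omega> (n+1) \<ge> 1" by (rule lead_N[OF M lead]) simp
      then have sle: "s \<le> n + k + C" using cl Ns False by linarith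
      have Cle: "of_nat C \<le> suminf (Dterm M \<omega>)"
      proof -
        have "of_nat C = (\<Sum>j\<in>{j \<in> {n+1..<s}. sel M \<omega> j \<noteq> 1}. (1::ennreal))"
          by (simp add: C_def)
        also have "\<dots> \<le> (\<Sum>j\<in>{j \<in> {n+1..<s}. sel M \<omega> j \<noteq> 1}. Dterm M \<omega> j)"
        proof (rule sum_mono)
          fix j assume j: "j \<in> {j \<in> {n+1..<s}. sel M \<omega> j \<noteq> 1}"
          then have jn: "j > n" and js: "j \<le> s - 1" and sj: "sel M \<omega> j \<noteq> 1" by auto
          have ex: "\<omega> (Gc (Suc j)) < eps M (Suc j) (nuhat_glob M \<omega> (hist M \<omega> j) j) \<and> 1 / real M \<le> \<omega> (Uc (Suc j))"
            using sel_explore[OF _ lead_Mt[OF M lead jn] sj] M by simp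
          have "Nn M \<omega> j \<le> k - 1" using Nn_mono[OF js, of M \<omega>] Ns1 by simp
          then have "Nn M \<omega> j < k" using \<open>k \<noteq> 0\<close> by linarith
          then have "ennreal (real (Nn M \<omega> j)) < of_nat k"
            by (simp add: ennreal_of_nat_eq_real_of_nat ennreal_less_iff)
          then have "ennreal (real (Nn M \<omega> j)) < Kmax \<omega>" using kK by (rule less_le_trans)
          then have "condj M \<omega> j" using ex by (simp add: condj_def)
          then show "(1::ennreal) \<le> Dterm M \<omega> j" using ex by (simp add: Dterm_def)
        qed
        also have "\<dots> \<le> (\<Sum>j\<in>{n+1..<s}. Dterm M \<omega> j)"
          by (rule sum_mono2) auto
        also have "\<dots> \<le> suminf (Dterm M \<omega>)"
          by (rule sum_le_suminf) auto
        finally show ?thesis .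
      qed
      have "ennreal (real s) \<le> of_nat n + of_nat k + of_nat C"
        using sle by (simp add: ennreal_of_nat_eq_real_of_nat[symmetric] of_nat_add[symmetric] del: of_nat_add)
      also have "\<dots> \<le> of_nat n + Kmax \<omega> + suminf (Dterm M \<omega>)"
        using kK Cle by (intro add_mono) auto
      finally show ?thesis by (simp add: nus)
    qed
  qed
qed

lemma Esum_le:
  assumes M: "M \<ge> 1"
  shows "suminf (Eterm M \<omega>) \<le> Kmax \<omega>"
proof -
  have inv: "\<exists>c::nat. (\<Sum>j<m. Eterm M \<omega> j) = of_nat c \<and> c \<le> Nn M \<omega> m \<and> of_nat c \<le> Kmax \<omega>" for m
  proof (induction m)
    case 0 then show ?case by (intro exI[of _ 0]) simp
  next
    case (Suc m)
    then obtain c where c: "(\<Sum>j<m. Eterm M \<omega> j) = of_nat c" "c \<le> Nn M \<omega> m" "of_nat c \<le> Kmax \<omega>" by blast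
    show ?case
    proof (cases "condj M \<omega> m \<and> \<omega> (Uc (Suc m)) < 1 / real M")
      case True
      then have s1: "sel M \<omega> m = 1" using sel_one[OF M] by (simp add: condj_def)
      have "ennreal (real (Nn M \<omega> m)) < Kmax \<omega>" using True by (simp add: condj_def)
      then obtain t where "ennreal (real (Nn M \<omega> m)) < ennreal (real (nuhat_t 1 \<omega> t))"
        unfolding Kmax_def by (auto simp: less_SUP_iff)
      then have "Nn M \<omega> m < nuhat_t 1 \<omega> t" by (simp add: ennreal_less_iff)
      then have "c + 1 \<le> nuhat_t 1 \<omega> t" using c(2) by linarith
      then have "(of_nat (c + 1) :: ennreal) \<le> of_nat (nuhat_t 1 \<omega> t)" by (simp only: of_nat_le_iff)
      then have "of_nat (c + 1) \<le> ennreal (real (nuhat_t 1 \<omega> t))"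
        by (simp only: ennreal_of_nat_eq_real_of_nat)
      also have "\<dots> \<le> Kmax \<omega>" by (rule Kmax_ge)
      finally have "of_nat (c + 1) \<le> Kmax \<omega>" .
      moreover have "(\<Sum>j<Suc m. Eterm M \<omega> j) = of_nat (c + 1)"
        using c(1) True by (simp add: Eterm_def)
      moreover have "c + 1 \<le> Nn M \<omega> (Suc m)" using c(2) s1 by simp
      ultimately show ?thesis by blast
    next
      case False
      have "(\<Sum>j<Suc m. Eterm M \<omega> j) = of_nat c"
        using c(1) False by (simp add: Eterm_def)
      moreover have "c \<le> Nn M \<omega> (Suc m)" using c(2) Nn_mono[of m "Suc m" M \<omega>] by simp
      ultimately show ?thesis using c(3) by blast
    qed
  qed
  show ?thesis
  proof (rule suminf_le_const)
    show "summable (Eterm M \<omega>)" by simp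
    fix m show "sum (Eterm M \<omega>) {..<m} \<le> Kmax \<omega>" using inv[of m] by auto
  qed
qed




lemma indep_coord:
  fixes f :: "(coord \<Rightarrow> real) \<Rightarrow> ennreal" and g :: "real \<Rightarrow> ennreal"
  assumes f: "f \<in> borel_measurable (focus_space mu)" and g: "g \<in> borel_measurable borel"
    and inv: "\<And>\<omega> x. f ((fun_upd \<omega> c x)) = f \<omega>"
  shows "(\<integral>\<^sup>+\<omega>. f \<omega> * g (\<omega> c) \<partial>focus_space mu) = (\<integral>\<^sup>+\<omega>. f \<omega> \<partial>focus_space mu) * (\<integral>\<^sup>+x. g x \<partial>coord_dist mu c)"
proof -
  define I where "I = UNIV - {c}"
  define Mc where "Mc = coord_dist mu c"
  define PI where "PI = PiM I (coord_dist mu)"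
  have insI: "insert c I = UNIV" by (auto simp: I_def)
  have pMc: "prob_space Mc" unfolding Mc_def by (rule prob_coord_dist)
  have pPI: "prob_space PI" unfolding PI_def by (rule prob_space_PiM) (rule prob_coord_dist)
  interpret P: pair_sigma_finite Mc PI
    using pMc pPI by (intro pair_sigma_finite.intro prob_space_imp_sigma_finite)
  interpret Mc: prob_space Mc by (rule pMc)
  have split: "distr (Mc \<Otimes>\<^sub>M PI) (focus_space mu) (\<lambda>(x, X). (fun_upd X c x)) = focus_space mu"
    unfolding focus_space_def Mc_def PI_def
    using distr_pair_PiM_eq_PiM[of I "coord_dist mu" c] prob_coord_dist by (simp add: insI)
  have Tm: "(\<lambda>p. (fun_upd (snd p) c (fst p))) \<in> measurable (Mc \<Otimes>\<^sub>M PI) (focus_space mu)"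
    unfolding focus_space_def
    by (rule measurable_fun_upd[where J=I]) (auto simp: I_def PI_def Mc_def)
  have T_eq: "(\<lambda>(x, X). (fun_upd X c x)) = (\<lambda>p. (fun_upd (snd p) c (fst p)))" by (auto simp: fun_eq_iff)
  have Um: "(\<lambda>X. (fun_upd X c 0)) \<in> measurable PI (focus_space mu)"
    unfolding focus_space_def
    by (rule measurable_fun_upd[where J=I]) (auto simp: I_def PI_def)
  have fU: "(\<lambda>X. f ((fun_upd X c 0))) \<in> borel_measurable PI"
    by (rule measurable_compose[OF Um f])
  have gM: "g \<in> borel_measurable Mc"
    using g by (simp add: Mc_def measurable_cong_sets[OF sets_coord_dist refl])
  have finv: "f ((fun_upd X c x)) = f ((fun_upd X c 0))" for X x
    using inv[of "(fun_upd X c x)" 0] by simp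
  have gen: "(\<integral>\<^sup>+\<omega>. F \<omega> \<partial>focus_space mu) = (\<integral>\<^sup>+X. (\<integral>\<^sup>+x. F ((fun_upd X c x)) \<partial>Mc) \<partial>PI)"
    if F: "F \<in> borel_measurable (focus_space mu)" for F
  proof -
    have FT: "(\<lambda>p. F ((fun_upd (snd p) c (fst p)))) \<in> borel_measurable (Mc \<Otimes>\<^sub>M PI)"
      by (rule measurable_compose[OF Tm F])
    have "(\<integral>\<^sup>+\<omega>. F \<omega> \<partial>focus_space mu) = (\<integral>\<^sup>+\<omega>. F \<omega> \<partial>distr (Mc \<Otimes>\<^sub>M PI) (focus_space mu) (\<lambda>(x, X). (fun_upd X c x)))"
      by (simp only: split)
    also have "\<dots> = (\<integral>\<^sup>+p. F ((fun_upd (snd p) c (fst p))) \<partial>(Mc \<Otimes>\<^sub>M PI))"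
      unfolding T_eq by (rule nn_integral_distr[OF Tm]) (simp add: F)
    also have "\<dots> = (\<integral>\<^sup>+X. (\<integral>\<^sup>+x. F ((fun_upd X c x)) \<partial>Mc) \<partial>PI)"
      using P.nn_integral_snd[OF FT] by simp
    finally show ?thesis .
  qed
  have fg: "(\<lambda>\<omega>. f \<omega> * g (\<omega> c)) \<in> borel_measurable (focus_space mu)"
  proof -
    have "(\<lambda>\<omega>. g (\<omega> c)) \<in> borel_measurable (focus_space mu)"
      by (rule measurable_compose[OF coord_meas g])
    then show ?thesis using f by (intro borel_measurable_times_ennreal)
  qed
  have "(\<integral>\<^sup>+\<omega>. f \<omega> * g (\<omega> c) \<partial>focus_space mu) = (\<integral>\<^sup>+X. (\<integral>\<^sup>+x. f ((fun_upd X c 0)) * g x \<partial>Mc) \<partial>PI)"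
    using gen[OF fg]
  proof -
    have e: "(\<integral>\<^sup>+x. f (fun_upd X c x) * g (fun_upd X c x c) \<partial>Mc) = (\<integral>\<^sup>+x. f (fun_upd X c 0) * g x \<partial>Mc)" for X
    proof (rule nn_integral_cong)
      fix x show "f (fun_upd X c x) * g (fun_upd X c x c) = f (fun_upd X c 0) * g x"
        using finv[of X x] by simp
    qed
    show ?thesis using gen[OF fg] e by simp
  qed
  also have "\<dots> = (\<integral>\<^sup>+X. f ((fun_upd X c 0)) * (\<integral>\<^sup>+x. g x \<partial>Mc) \<partial>PI)"
    by (intro nn_integral_cong nn_integral_cmult gM)
  also have "\<dots> = (\<integral>\<^sup>+X. f ((fun_upd X c 0)) \<partial>PI) * (\<integral>\<^sup>+x. g x \<partial>Mc)"
    by (rule nn_integral_multc[OF fU])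
  also have "(\<integral>\<^sup>+X. f ((fun_upd X c 0)) \<partial>PI) = (\<integral>\<^sup>+\<omega>. f \<omega> \<partial>focus_space mu)"
  proof -
    have "(\<integral>\<^sup>+\<omega>. f \<omega> \<partial>focus_space mu) = (\<integral>\<^sup>+X. (\<integral>\<^sup>+x. f ((fun_upd X c 0)) \<partial>Mc) \<partial>PI)"
    proof -
      have e: "(\<integral>\<^sup>+x. f (fun_upd X c x) \<partial>Mc) = (\<integral>\<^sup>+x. f (fun_upd X c 0) \<partial>Mc)" for X
        by (rule nn_integral_cong) (rule finv)
      show ?thesis using gen[OF f] e by simp
    qed
    also have "\<dots> = (\<integral>\<^sup>+X. f ((fun_upd X c 0)) \<partial>PI)"
      by (intro nn_integral_cong) (simp add: Mc.emeasure_space_1)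
    finally show ?thesis by simp
  qed
  finally show ?thesis by (simp add: Mc_def)
qed




section \<open>Invariance under changing a Uc coordinate\<close>

lemma glr_upd: "glr_val (fun_upd \<omega> (Uc i) x) = glr_val \<omega>"
  by (simp add: glr_val_def fun_eq_iff)

lemma Tloc_upd: "Tloc (fun_upd \<omega> (Uc i) x) h m = Tloc \<omega> h m"
  by (simp add: Tloc_def glr_upd Let_def)

lemma khat_upd: "khat (fun_upd \<omega> (Uc i) x) h m = khat \<omega> h m"
  by (simp add: khat_def Tloc_upd glr_upd Let_def)

lemma nuhat_loc_upd: "nuhat_loc (fun_upd \<omega> (Uc i) x) h m = nuhat_loc \<omega> h m"
  by (simp add: nuhat_loc_def khat_upd)

lemma Tglob_upd: "Tglob M (fun_upd \<omega> (Uc i) x) h = Tglob M \<omega> h"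
  by (simp add: Tglob_def Tloc_upd)

lemma Mt_upd: "Mt M (fun_upd \<omega> (Uc i) x) h t = Mt M \<omega> h t"
  by (simp add: Mt_def Tglob_upd Tloc_upd)

lemma nuhat_glob_upd: "nuhat_glob M (fun_upd \<omega> (Uc i) x) h t = nuhat_glob M \<omega> h t"
  by (simp add: nuhat_glob_def Mt_upd nuhat_loc_upd)

lemma select_upd: "t \<noteq> i \<Longrightarrow> select M (fun_upd \<omega> (Uc i) x) h t = select M \<omega> h t"
  by (simp add: select_def nuhat_glob_upd Mt_upd)

lemma hist_upd: "t < i \<Longrightarrow> hist M (fun_upd \<omega> (Uc i) x) t = hist M \<omega> t"
  by (induction t) (simp_all add: select_upd)

lemma Kmax_upd: "Kmax (fun_upd \<omega> (Uc i) x) = Kmax \<omega>"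
  by (simp add: Kmax_def nuhat_t_def hist_single nuhat_glob_upd)

lemma condj_upd: "condj M (fun_upd \<omega> (Uc (Suc j)) x) j = condj M \<omega> j"
  by (simp add: condj_def Kmax_upd hist_upd nuhat_glob_upd)

lemma count_comp_gen:
  assumes "f \<in> measurable N (count_space UNIV)" and "space M' = UNIV"
  shows "(\<lambda>x. g (f x)) \<in> measurable N M'"
  by (rule measurable_compose[OF assms(1)]) (simp add: measurable_count_space_eq1 assms(2))

lemma nuhat_t_meas: "(\<lambda>\<omega>. nuhat_t M \<omega> t) \<in> measurable (focus_space mu) (count_space UNIV)"
  unfolding nuhat_t_def
  by (rule measurable_compose_countable[where g="\<lambda>\<omega>. hist M \<omega> t", OF _ hist_meas]) (rule nuhat_glob_meas)

lemma Kmax_meas: "Kmax \<in> borel_measurable (focus_space mu)"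
proof -
  have "(\<lambda>\<omega>. SUP t\<in>UNIV. ennreal (real (nuhat_t 1 \<omega> t))) \<in> borel_measurable (focus_space mu)"
    by (rule borel_measurable_SUP) (simp, rule count_comp_gen[OF nuhat_t_meas], simp)
  then show ?thesis unfolding Kmax_def[abs_def] .
qed

lemma Nn_meas: "(\<lambda>\<omega>. Nn M \<omega> j) \<in> measurable (focus_space mu) (count_space UNIV)"
  by (rule count_comp[OF hist_meas])

lemma condj_sets: "{\<omega>. condj M \<omega> j} \<in> sets (focus_space mu)"
proof -
  have a: "{\<omega> \<in> space (focus_space mu). ennreal (real (Nn M \<omega> j)) < Kmax \<omega>} \<in> sets (focus_space mu)"
    by (rule borel_measurable_less[OF count_comp_gen[OF Nn_meas] Kmax_meas]) simp
  have e: "(\<lambda>\<omega>. eps M (Suc j) (nuhat_glob M \<omega> (hist M \<omega> j) j)) \<in> borel_measurable (focus_space mu)"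
  proof -
    have hm: "(\<lambda>\<omega>. nuhat_glob M \<omega> (hist M \<omega> j) j) \<in> measurable (focus_space mu) (count_space UNIV)"
      by (rule measurable_compose_countable[where g="\<lambda>\<omega>. hist M \<omega> j", OF nuhat_glob_meas hist_meas])
    show ?thesis by (rule count_comp_gen[OF hm]) simp
  qed
  have b: "{\<omega> \<in> space (focus_space mu). \<omega> (Gc (Suc j)) < eps M (Suc j) (nuhat_glob M \<omega> (hist M \<omega> j) j)} \<in> sets (focus_space mu)"
    by (rule borel_measurable_less[OF coord_meas e])
  have eq: "{\<omega>. condj M \<omega> j} = {\<omega> \<in> space (focus_space mu). ennreal (real (Nn M \<omega> j)) < Kmax \<omega>} \<inter>
      {\<omega> \<in> space (focus_space mu). \<omega> (Gc (Suc j)) < eps M (Suc j) (nuhat_glob M \<omega> (hist M \<omega> j) j)}"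
    by (auto simp: condj_def)
  show ?thesis by (subst eq) (rule sets.Int[OF a b])
qed

lemma Dterm_eq: "(\<lambda>\<omega>. Dterm M \<omega> j) = (\<lambda>\<omega>. indicator {\<omega>. condj M \<omega> j} \<omega> * indicator {x. 1 / real M \<le> x} (\<omega> (Uc (Suc j))))"
  by (auto simp: Dterm_def fun_eq_iff split: split_indicator)

lemma Eterm_eq: "(\<lambda>\<omega>. Eterm M \<omega> j) = (\<lambda>\<omega>. indicator {\<omega>. condj M \<omega> j} \<omega> * indicator {x. x < 1 / real M} (\<omega> (Uc (Suc j))))"
  by (auto simp: Eterm_def fun_eq_iff split: split_indicator)

lemma ind_coord_meas:
  assumes "A \<in> sets borel"
  shows "(\<lambda>\<omega>. indicator A (\<omega> c) :: ennreal) \<in> borel_measurable (focus_space mu)"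
  by (rule measurable_compose[OF coord_meas borel_measurable_indicator[OF assms]])

lemma Dterm_meas: "(\<lambda>\<omega>. Dterm M \<omega> j) \<in> borel_measurable (focus_space mu)"
  unfolding Dterm_eq
  by (rule borel_measurable_times_ennreal[OF borel_measurable_indicator[OF condj_sets] ind_coord_meas]) simp

lemma Eterm_meas: "(\<lambda>\<omega>. Eterm M \<omega> j) \<in> borel_measurable (focus_space mu)"
  unfolding Eterm_eq
  by (rule borel_measurable_times_ennreal[OF borel_measurable_indicator[OF condj_sets] ind_coord_meas]) simp

lemma Dsum_meas: "(\<lambda>\<omega>. suminf (Dterm M \<omega>)) \<in> borel_measurable (focus_space mu)"
  by (rule borel_measurable_suminf_order) (rule Dterm_meas)

lemma Esum_meas: "(\<lambda>\<omega>. suminf (Eterm M \<omega>)) \<in> borel_measurable (focus_space mu)"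
  by (rule borel_measurable_suminf_order) (rule Eterm_meas)

lemma Tloct_meas: "(\<lambda>\<omega>. T_loc_t M \<omega> t m) \<in> borel_measurable (focus_space mu)"
  unfolding T_loc_t_def
  by (rule measurable_compose_countable[where g="\<lambda>\<omega>. hist M \<omega> t", OF _ hist_meas]) (rule Tloc_meas)

lemma lead_sets: "{\<omega>. stream1_leads_after M \<omega> n} \<in> sets (focus_space mu)"
proof -
  have "{\<omega>. stream1_leads_after M \<omega> n} = (\<Inter>t\<in>{t. t > n}.
      {\<omega> \<in> space (focus_space mu). Max ((T_loc_t M \<omega> t) ` {2..M}) < T_loc_t M \<omega> t 1})"
    by (auto simp: stream1_leads_after_def)
  also have "\<dots> \<in> sets (focus_space mu)"
  proof (rule sets.countable_INT'')
    show "UNIV \<in> sets (focus_space mu)" using sets.top[of "focus_space mu"] by simp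
    show "countable {t. t > n}" by simp
    fix t assume "t \<in> {t. t > n}"
    have "(\<lambda>\<omega>. Max ((\<lambda>m. T_loc_t M \<omega> t m) ` {2..M})) \<in> borel_measurable (focus_space mu)"
      by (rule borel_measurable_Max) (auto intro: Tloct_meas)
    then show "{\<omega> \<in> space (focus_space mu). Max ((T_loc_t M \<omega> t) ` {2..M}) < T_loc_t M \<omega> t 1} \<in> sets (focus_space mu)"
      by (intro borel_measurable_less Tloct_meas) auto
  qed
  finally show ?thesis .
qed

lemma t0_meas: "t0 M \<in> borel_measurable (focus_space mu)"
proof -
  have L: "(\<lambda>\<omega>. LEAST n. stream1_leads_after M \<omega> n) \<in> measurable (focus_space mu) (count_space UNIV)"
  proof (rule measurable_Least)
    fix n show "(\<lambda>\<omega>. stream1_leads_after M \<omega> n) \<in> measurable (focus_space mu) (count_space UNIV)"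
      by (subst Measurable.pred_def) (simp add: lead_sets)
  qed
  have E: "{\<omega> \<in> space (focus_space mu). \<exists>n. stream1_leads_after M \<omega> n} \<in> sets (focus_space mu)"
  proof -
    have "{\<omega> \<in> space (focus_space mu). \<exists>n. stream1_leads_after M \<omega> n} = (\<Union>n. {\<omega>. stream1_leads_after M \<omega> n})"
      by auto
    also have "\<dots> \<in> sets (focus_space mu)" by (rule sets.countable_UN'') (auto intro: lead_sets)
    finally show ?thesis .
  qed
  have "(\<lambda>\<omega>. if \<exists>n. stream1_leads_after M \<omega> n then of_nat (LEAST n. stream1_leads_after M \<omega> n) else (\<infinity>::ennreal)) \<in> borel_measurable (focus_space mu)"
    by (rule measurable_If[OF count_comp_gen[OF L] measurable_const E]) simp_all
  then show ?thesis unfolding t0_def[abs_def] .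
qed




lemma unif_ge:
  assumes M: "M \<ge> 1"
  shows "(\<integral>\<^sup>+x. indicator {x. 1 / real M \<le> x} x \<partial>coord_dist mu (Uc i)) = ennreal (1 - 1 / real M)"
proof -
  have s: "{x::real. 1 / real M \<le> x} \<in> sets borel" by simp
  have p: "0 \<le> 1 / real M" by simp
  have i: "{0..1::real} \<inter> {x. 1 / real M \<le> x} = {1 / real M..1}" by (auto intro: order_trans[OF p])
  have le: "1 / real M \<le> 1" using M by simp
  have "(\<integral>\<^sup>+x. indicator {x. 1 / real M \<le> x} x \<partial>coord_dist mu (Uc i))
      = emeasure (uniform_measure lborel {0..1::real}) {x. 1 / real M \<le> x}"
    by (simp add: coord_dist_def)
  also have "\<dots> = emeasure lborel {1 / real M..1} / emeasure lborel {0..1::real}"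
    using s by (subst emeasure_uniform_measure) (simp_all add: i)
  also have "\<dots> = ennreal (1 - 1 / real M)" using le by (simp add: divide_ennreal_def)
  finally show ?thesis .
qed

lemma unif_lt:
  assumes M: "M \<ge> 1"
  shows "(\<integral>\<^sup>+x. indicator {x. x < 1 / real M} x \<partial>coord_dist mu (Uc i)) = ennreal (1 / real M)"
proof -
  have s: "{x::real. x < 1 / real M} \<in> sets borel" by simp
  have le1: "1 / real M \<le> 1" using M by simp
  have i: "{0..1::real} \<inter> {x. x < 1 / real M} = {0..<1 / real M}" using le1 by auto
  have le: "0 \<le> 1 / real M" using M by simp
  have "(\<integral>\<^sup>+x. indicator {x. x < 1 / real M} x \<partial>coord_dist mu (Uc i))
      = emeasure (uniform_measure lborel {0..1::real}) {x. x < 1 / real M}"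
    by (simp add: coord_dist_def)
  also have "\<dots> = emeasure lborel {0..<1 / real M} / emeasure lborel {0..1::real}"
    using s by (subst emeasure_uniform_measure) (simp_all add: i)
  also have "\<dots> = ennreal (1 / real M)" using le by (simp add: divide_ennreal_def)
  finally show ?thesis .
qed

lemma ind_condj_upd: "indicator {\<omega>. condj M \<omega> j} (fun_upd \<omega> (Uc (Suc j)) x) = (indicator {\<omega>. condj M \<omega> j} \<omega> :: ennreal)"
  by (simp add: indicator_def condj_upd)

lemma D_int:
  assumes M: "M \<ge> 1"
  shows "(\<integral>\<^sup>+\<omega>. Dterm M \<omega> j \<partial>focus_space mu) = (\<integral>\<^sup>+\<omega>. indicator {\<omega>. condj M \<omega> j} \<omega> \<partial>focus_space mu) * ennreal (1 - 1 / real M)"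
  unfolding Dterm_eq
  by (subst indep_coord[OF borel_measurable_indicator[OF condj_sets] _ ind_condj_upd])
     (simp_all add: unif_ge[OF M])

lemma E_int:
  assumes M: "M \<ge> 1"
  shows "(\<integral>\<^sup>+\<omega>. Eterm M \<omega> j \<partial>focus_space mu) = (\<integral>\<^sup>+\<omega>. indicator {\<omega>. condj M \<omega> j} \<omega> \<partial>focus_space mu) * ennreal (1 / real M)"
  unfolding Eterm_eq
  by (subst indep_coord[OF borel_measurable_indicator[OF condj_sets] _ ind_condj_upd])
     (simp_all add: unif_lt[OF M])

lemma Dsum_int:
  assumes M: "M \<ge> 1"
  shows "(\<integral>\<^sup>+\<omega>. suminf (Dterm M \<omega>) \<partial>focus_space mu) \<le> of_nat (M - 1) * (\<integral>\<^sup>+\<omega>. Kmax \<omega> \<partial>focus_space mu)"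
proof -
  have fac: "ennreal (1 - 1 / real M) = of_nat (M - 1) * ennreal (1 / real M)"
  proof -
    have r: "1 - 1 / real M = real (M - 1) * (1 / real M)" using M by (simp add: field_simps of_nat_diff)
    have "ennreal (1 - 1 / real M) = ennreal (real (M - 1)) * ennreal (1 / real M)"
      unfolding r by (rule ennreal_mult) simp_all
    then show ?thesis by (simp only: ennreal_of_nat_eq_real_of_nat)
  qed
  have "(\<integral>\<^sup>+\<omega>. suminf (Dterm M \<omega>) \<partial>focus_space mu) = (\<Sum>j. \<integral>\<^sup>+\<omega>. Dterm M \<omega> j \<partial>focus_space mu)"
    by (rule nn_integral_suminf) (rule Dterm_meas)
  also have "\<dots> = (\<Sum>j. of_nat (M - 1) * (\<integral>\<^sup>+\<omega>. Eterm M \<omega> j \<partial>focus_space mu))"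
    by (simp add: D_int[OF M] E_int[OF M] fac mult.assoc mult.left_commute)
  also have "\<dots> = of_nat (M - 1) * (\<Sum>j. \<integral>\<^sup>+\<omega>. Eterm M \<omega> j \<partial>focus_space mu)"
    by (rule ennreal_suminf_cmult)
  also have "(\<Sum>j. \<integral>\<^sup>+\<omega>. Eterm M \<omega> j \<partial>focus_space mu) = (\<integral>\<^sup>+\<omega>. suminf (Eterm M \<omega>) \<partial>focus_space mu)"
    by (rule nn_integral_suminf[symmetric]) (rule Eterm_meas)
  also have "\<dots> \<le> (\<integral>\<^sup>+\<omega>. Kmax \<omega> \<partial>focus_space mu)"
    by (rule nn_integral_mono) (rule Esum_le[OF M])
  finally show ?thesis by (simp add: mult_left_mono)
qed

lemma nuhat_max_bound:
  assumes M: "M \<ge> 2"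
  shows "nuhat_max M lam \<omega> \<le> t0 M \<omega> + Kmax \<omega> + suminf (Dterm M \<omega>)"
proof (cases "\<exists>n. stream1_leads_after M \<omega> n")
  case True
  define n where "n = (LEAST n. stream1_leads_after M \<omega> n)"
  have lead: "stream1_leads_after M \<omega> n" unfolding n_def using True by (metis LeastI)
  have t0: "t0 M \<omega> = of_nat n" using True by (simp add: t0_def n_def)
  show ?thesis unfolding nuhat_max_def t0
    by (rule SUP_least) (rule pw_bound[OF M lead])
next
  case False
  then have "t0 M \<omega> = \<infinity>" by (simp add: t0_def)
  then show ?thesis by simp
qed

theorem proposition2:
  fixes M :: nat and lam mu :: real
  assumes "M > 1" and "lam > 0" and "mu \<noteq> 0"
  shows "(\<integral>\<^sup>+ \<omega>. nuhat_max M lam \<omega> \<partial>focus_space mu)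
         \<le> (\<integral>\<^sup>+ \<omega>. t0 M \<omega> \<partial>focus_space mu)
           + of_nat M * (\<integral>\<^sup>+ \<omega>. (SUP t. ennreal (real (nuhat_t 1 \<omega> t))) \<partial>focus_space mu)"
proof -
  have M2: "M \<ge> 2" and M1: "M \<ge> 1" using assms(1) by auto
  let ?K = "\<integral>\<^sup>+ \<omega>. Kmax \<omega> \<partial>focus_space mu"
  have "(\<integral>\<^sup>+ \<omega>. nuhat_max M lam \<omega> \<partial>focus_space mu)
      \<le> (\<integral>\<^sup>+ \<omega>. t0 M \<omega> + Kmax \<omega> + suminf (Dterm M \<omega>) \<partial>focus_space mu)"
    by (rule nn_integral_mono) (rule nuhat_max_bound[OF M2])
  also have "\<dots> = (\<integral>\<^sup>+ \<omega>. t0 M \<omega> + Kmax \<omega> \<partial>focus_space mu) + (\<integral>\<^sup>+ \<omega>. suminf (Dterm M \<omega>) \<partial>focus_space mu)"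
    by (rule nn_integral_add) (auto intro: borel_measurable_add t0_meas Kmax_meas Dsum_meas)
  also have "(\<integral>\<^sup>+ \<omega>. t0 M \<omega> + Kmax \<omega> \<partial>focus_space mu) = (\<integral>\<^sup>+ \<omega>. t0 M \<omega> \<partial>focus_space mu) + ?K"
    by (rule nn_integral_add) (auto intro: t0_meas Kmax_meas)
  also have "(\<integral>\<^sup>+ \<omega>. t0 M \<omega> \<partial>focus_space mu) + ?K + (\<integral>\<^sup>+ \<omega>. suminf (Dterm M \<omega>) \<partial>focus_space mu)
      \<le> (\<integral>\<^sup>+ \<omega>. t0 M \<omega> \<partial>focus_space mu) + ?K + of_nat (M - 1) * ?K"
    by (intro add_left_mono Dsum_int[OF M1])
  also have "(\<integral>\<^sup>+ \<omega>. t0 M \<omega> \<partial>focus_space mu) + ?K + of_nat (M - 1) * ?K = (\<integral>\<^sup>+ \<omega>. t0 M \<omega> \<partial>focus_space mu) + of_nat M * ?K"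
  proof -
    have "M = Suc (M - 1)" using M1 by simp
    then have "of_nat M = (1::ennreal) + of_nat (M - 1)"
      by (metis of_nat_Suc add.commute)
    then have "?K + of_nat (M - 1) * ?K = of_nat M * ?K" by (simp add: distrib_right)
    then show ?thesis by (simp add: add.assoc)
  qed
  finally show ?thesis by (simp add: add.assoc Kmax_def)
qed


end
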